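(* Let $X$ be a real Hilbert space and $I$ either $[0,T]$ ($T>0$) or $[0,+\infty)$. Assume: $K\subset X$ is a nonempty closed convex cone; $A:X\to X$ satisfies $(Au-Av,u-v)_X\ge m_A\|u-v\|_X^2$ and $\|Au-Av\|_X\le L_A\|u-v\|_X$ for all $u,v\in X$, with $m_A,L_A>0$; $f\in C(I;X)$; $\mathcal{S}:C(I;X)\to C(I;X)$ is a history-dependent operator; $j:X\times K\to\mathbb{R}$ is such that $j(\eta,\cdot)$ is convex, positively homogeneous and Lipschitz continuous on $K$ for every $\eta\in X$, and there is $\alpha_j\ge0$ with $j(\eta_1,v_2)-j(\eta_1,v_1)+j(\eta_2,v_1)-j(\eta_2,v_2)\le\alpha_j\|\eta_1-\eta_2\|_X\|v_1-v_2\|_X$ for all $\eta_i\in X$, $v_i\in K$. Assume moreover $\alpha_j+1<m_A$. Then there exists a unique function $u\in C(I;K)$ such that $$-u(t)\in \mathrm{N}_{C(u(t),t)}\big(Au(t)+\mathcal{S}u(t)\big)\quad\forall\,t\in I.$$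
   Context: $\mathcal{S}$ is history-dependent if for every compact $\mathcal J\subset I$ there is $L_{\mathcal J}>0$ with $\|\mathcal{S}u_1(t)-\mathcal{S}u_2(t)\|_X\le L_{\mathcal J}\int_0^t\|u_1(s)-u_2(s)\|_X ds$ for all $u_1,u_2\in C(I;X)$, $t\in\mathcal J$. Define $J(\eta,v)=j(\eta,v)$ for $v\in K$, $J(\eta,v)=+\infty$ for $v\notin K$; $C(\eta)=\{\xi\in X: J(\eta,v)\ge(\xi,v)_X\ \forall v\in X\}$; $C(\eta,t)=f(t)-C(\eta)$. For a nonempty closed convex $D\subset X$, $\mathrm{N}_D(x)=\{\xi:(\xi,w-x)_X\le0\ \forall w\in D\}$ if $x\in D$, $\emptyset$ otherwise. *)

theory Defs
  imports "HOL-Analysis.Analysis" "HOL-Library.Extended_Real"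
begin

definition history_dependent :: "real set \<Rightarrow> ((real \<Rightarrow> 'a::real_normed_vector) \<Rightarrow> (real \<Rightarrow> 'a)) \<Rightarrow> bool" where
  "history_dependent I S \<longleftrightarrow>
     (\<forall>J. compact J \<and> J \<subseteq> I \<longrightarrow>
        (\<exists>L>0. \<forall>u1 u2 t. continuous_on I u1 \<and> continuous_on I u2 \<and> t \<in> J \<longrightarrow>
            norm (S u1 t - S u2 t) \<le> L * integral {0..t} (\<lambda>s. norm (u1 s - u2 s))))"

definition Jext :: "'a set \<Rightarrow> ('a \<Rightarrow> 'a \<Rightarrow> real) \<Rightarrow> 'a \<Rightarrow> 'a \<Rightarrow> ereal" where
  "Jext K j \<eta> v = (if v \<in> K then ereal (j \<eta> v) else \<infinity>)"

definition Cset :: "'a::real_inner set \<Rightarrow> ('a \<Rightarrow> 'a \<Rightarrow> real) \<Rightarrow> 'a \<Rightarrow> 'a set" where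
  "Cset K j \<eta> = {\<xi>. \<forall>v. Jext K j \<eta> v \<ge> ereal (inner \<xi> v)}"

definition Cset_t :: "'a::real_inner set \<Rightarrow> ('a \<Rightarrow> 'a \<Rightarrow> real) \<Rightarrow> (real \<Rightarrow> 'a) \<Rightarrow> 'a \<Rightarrow> real \<Rightarrow> 'a set" where
  "Cset_t K j f \<eta> t = (\<lambda>\<xi>. f t - \<xi>) ` Cset K j \<eta>"

definition normal_cone :: "'a::real_inner set \<Rightarrow> 'a \<Rightarrow> 'a set" where
  "normal_cone D x = (if x \<in> D then {\<xi>. \<forall>w\<in>D. inner \<xi> (w - x) \<le> 0} else {})"

end

theory Submission
  imports Defs
begin

lemma parallelo_aux:
  fixes a b z :: "'a::real_inner"
  shows "(norm (a - b))\<^sup>2 + 4 * (norm ((1/2) *\<^sub>R a + (1/2) *\<^sub>R b - z))\<^sup>2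
        = 2 * (norm (a - z))\<^sup>2 + 2 * (norm (b - z))\<^sup>2"
proof -
  have e: "(1/2) *\<^sub>R a + (1/2) *\<^sub>R b - z = (1/2) *\<^sub>R ((a - z) + (b - z))"
  proof -
    have "(1/2) *\<^sub>R z + (1/2) *\<^sub>R z = z" by (metis scaleR_add_left field_sum_of_halves scaleR_one)
    then show ?thesis by (simp add: algebra_simps)
  qed
  have f: "a - b = (a - z) - (b - z)" by simp
  show ?thesis unfolding e f
    by (simp add: power2_norm_eq_inner inner_simps algebra_simps)
qed

lemma norm_add_scale_sq:
  fixes a b :: "'a::real_inner"
  shows "(norm (a + t *\<^sub>R b))\<^sup>2 = (norm a)\<^sup>2 + 2 * t * inner a b + t\<^sup>2 * (norm b)\<^sup>2"
  unfolding power2_norm_eq_inner by (simp add: inner_simps algebra_simps power2_eq_square inner_commute)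

lemma small_quad_nonneg:
  fixes a b :: real
  assumes "\<And>t. 0 < t \<Longrightarrow> t \<le> 1 \<Longrightarrow> 0 \<le> a + t * b" "b \<ge> 0"
  shows "0 \<le> a"
proof (rule ccontr)
  assume "\<not> 0 \<le> a"
  then have a: "a < 0" by simp
  show False
  proof (cases "b = 0")
    case True then show False using assms(1)[of 1] a by simp
  next
    case False
    then have bp: "b > 0" using assms(2) by simp
    define t where "t = min 1 (- a / (2*b))"
    have t0: "0 < t" using a bp by (simp add: t_def field_simps)
    have t1: "t \<le> 1" by (simp add: t_def)
    have "t * b \<le> - a / 2" using bp by (simp add: t_def min_def field_simps)
    then have "a + t * b < 0" using a by simp
    then show False using assms(1)[OF t0 t1] by simp
  qed
qed

lemma prox_exists:
  fixes K :: "'a::{real_inner,complete_space} set" and \<phi> :: "'a \<Rightarrow> real"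
  assumes K: "K \<noteq> {}" "closed K" and cv: "convex_on K \<phi>" and lip: "L-lipschitz_on K \<phi>"
  shows "\<exists>p\<in>K. \<forall>v\<in>K. inner (p - z) (v - p) + \<phi> v - \<phi> p \<ge> 0"
proof -
  define F where "F y = \<phi> y + (norm (y - z))\<^sup>2 / 2" for y
  obtain y0 where y0: "y0 \<in> K" using K by auto
  have L0: "L \<ge> 0" using lip by (simp add: lipschitz_on_def)
  define B where "B = \<phi> y0 - L * norm (z - y0) - L\<^sup>2 / 2"
  have lb: "F y \<ge> B" if "y \<in> K" for y
  proof -
    have "dist (\<phi> y) (\<phi> y0) \<le> L * dist y y0" by (rule lipschitz_onD[OF lip that y0])
    then have 1: "\<phi> y \<ge> \<phi> y0 - L * norm (y - y0)" by (simp add: dist_norm dist_real_def abs_le_iff)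
    have "norm (y - y0) \<le> norm (y - z) + norm (z - y0)" using norm_triangle_ineq[of "y - z" "z - y0"] by simp
    then have 2: "L * norm (y - y0) \<le> L * norm (y - z) + L * norm (z - y0)"
      using L0 by (metis distrib_left mult_left_mono)
    have 3: "(norm (y - z))\<^sup>2 / 2 - L * norm (y - z) \<ge> - L\<^sup>2 / 2"
      using zero_le_power2[of "norm (y - z) - L"] by (simp add: power2_eq_square algebra_simps)
    show ?thesis using 1 2 3 by (simp add: F_def B_def)
  qed
  define m0 where "m0 = Inf (F ` K)"
  have bdd: "bdd_below (F ` K)" by (rule bdd_belowI2[of K B F]) (rule lb)
  have m0le: "m0 \<le> F y" if "y \<in> K" for y
    unfolding m0_def using bdd that by (auto intro: cInf_lower)
  have "\<exists>y\<in>K. F y < m0 + inverse (real (Suc n))" for n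
  proof -
    have "m0 < m0 + inverse (real (Suc n))" by simp
    then show ?thesis unfolding m0_def using K bdd
      by (subst (asm) cInf_less_iff) auto
  qed
  then obtain y where yK: "\<And>n. y n \<in> K" and yF: "\<And>n. F (y n) < m0 + inverse (real (Suc n))"
    by metis
  have key: "(norm (a - b))\<^sup>2 \<le> 4 * (F a + F b - 2 * m0)" if a: "a \<in> K" and b: "b \<in> K" for a b
  proof -
    define c where "c = (1/2) *\<^sub>R a + (1/2) *\<^sub>R b"
    have cK: "c \<in> K" using cv a b unfolding convex_on_def convex_def c_def by auto
    have "\<phi> c \<le> (1/2) * \<phi> a + (1/2) * \<phi> b" using cv a b unfolding convex_on_def c_def
      by (metis field_sum_of_halves less_eq_real_def zero_less_divide_1_iff zero_less_numeral)
    moreover have "m0 \<le> F c" by (rule m0le[OF cK])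
    moreover note parallelo_aux[of a b z]
    ultimately show ?thesis by (simp add: F_def c_def)
  qed
  have "Cauchy y"
  proof (rule metric_CauchyI)
    fix e :: real assume e: "e > 0"
    obtain N :: nat where N: "8 / e\<^sup>2 < real N" using reals_Archimedean2 by blast
    have "dist (y m) (y n) < e" if "m \<ge> N" "n \<ge> N" for m n
    proof -
      have i1: "inverse (real (Suc m)) \<le> inverse (real (Suc N))" using that by (simp add: field_simps)
      have i2: "inverse (real (Suc n)) \<le> inverse (real (Suc N))" using that by (simp add: field_simps)
      have "(norm (y m - y n))\<^sup>2 \<le> 4 * (F (y m) + F (y n) - 2 * m0)" by (rule key[OF yK yK])
      also have "\<dots> \<le> 8 * inverse (real (Suc N))" using yF[of m] yF[of n] i1 i2 by (smt (verit))
      also have "\<dots> < e\<^sup>2"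
      proof -
        have "8 / e\<^sup>2 < real (Suc N)" using N by simp
        then have "8 < e\<^sup>2 * real (Suc N)" using e by (simp add: field_simps)
        then show ?thesis by (simp add: field_simps)
      qed
      finally have "(norm (y m - y n))\<^sup>2 < e\<^sup>2" .
      then have "norm (y m - y n) < e" using e by (meson abs_le_square_iff abs_norm_cancel not_less power2_less_imp_less less_le_not_le norm_ge_zero power_less_imp_less_base)
      then show ?thesis by (simp add: dist_norm)
    qed
    then show "\<exists>M. \<forall>m\<ge>M. \<forall>n\<ge>M. dist (y m) (y n) < e" by blast
  qed
  then obtain p where yp: "y \<longlonglongrightarrow> p" using convergent_eq_Cauchy by (metis convergent_def)
  have pK: "p \<in> K" using closed_sequentially[OF K(2)] yK yp by blast
  have Fc: "continuous_on K F" unfolding F_def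
    by (intro continuous_intros lipschitz_on_continuous_on[OF lip]) auto
  have "(\<lambda>n. F (y n)) \<longlonglongrightarrow> F p"
    by (rule continuous_on_tendsto_compose[OF Fc yp pK]) (simp add: yK)
  moreover have "(\<lambda>n. m0 + inverse (real (Suc n))) \<longlonglongrightarrow> m0 + 0"
    by (intro tendsto_intros LIMSEQ_inverse_real_of_nat)
  ultimately have "F p \<le> m0 + 0"
    by (rule LIMSEQ_le) (use yF less_imp_le in auto)
  then have pmin: "F p \<le> F v" if "v \<in> K" for v using m0le[OF that] by simp
  have "inner (p - z) (v - p) + \<phi> v - \<phi> p \<ge> 0" if v: "v \<in> K" for v
  proof -
    have "0 \<le> (\<phi> v - \<phi> p + inner (p - z) (v - p)) + t * ((norm (v - p))\<^sup>2 / 2)"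
      if t: "0 < t" "t \<le> 1" for t
    proof -
      define w where "w = (1 - t) *\<^sub>R p + t *\<^sub>R v"
      have wK: "w \<in> K" using cv pK v t unfolding convex_on_def convex_def w_def by auto
      have phw: "\<phi> w \<le> (1 - t) * \<phi> p + t * \<phi> v" using cv pK v t unfolding convex_on_def w_def by auto
      have wz: "w - z = (p - z) + t *\<^sub>R (v - p)" by (simp add: w_def algebra_simps)
      have nw: "(norm (w - z))\<^sup>2 = (norm (p - z))\<^sup>2 + 2 * t * inner (p - z) (v - p) + t\<^sup>2 * (norm (v - p))\<^sup>2"
        unfolding wz by (rule norm_add_scale_sq)
      have "F p \<le> F w" by (rule pmin[OF wK])
      then have "0 \<le> t * (\<phi> v - \<phi> p + inner (p - z) (v - p) + t * ((norm (v - p))\<^sup>2 / 2))"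
        using phw nw by (simp add: F_def algebra_simps power2_eq_square)
      then show ?thesis using t by (simp add: zero_le_mult_iff)
    qed
    from small_quad_nonneg[OF this] show ?thesis by simp
  qed
  then show ?thesis using pK by blast
qed

locale vi_setting =
  fixes K :: "'a::{real_inner, complete_space} set"
    and A :: "'a \<Rightarrow> 'a"
    and j :: "'a \<Rightarrow> 'a \<Rightarrow> real"
    and m_A L_A \<alpha>_j :: real
  assumes K: "K \<noteq> {}" "closed K" "convex K" "cone K"
    and A_mon: "\<And>u v. inner (A u - A v) (u - v) \<ge> m_A * (norm (u - v))\<^sup>2"
    and A_lip: "\<And>u v. norm (A u - A v) \<le> L_A * norm (u - v)"
    and mL: "m_A > 0" "L_A > 0"
    and j_convex: "\<And>\<eta>. convex_on K (j \<eta>)"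
    and j_homog: "\<And>\<eta> c v. c > 0 \<Longrightarrow> v \<in> K \<Longrightarrow> j \<eta> (c *\<^sub>R v) = c * j \<eta> v"
    and j_lip: "\<And>\<eta>. \<exists>L. L-lipschitz_on K (j \<eta>)"
    and alpha: "\<alpha>_j \<ge> 0"
    and j_cross: "\<And>\<eta>1 \<eta>2 v1 v2. v1 \<in> K \<Longrightarrow> v2 \<in> K \<Longrightarrow>
        j \<eta>1 v2 - j \<eta>1 v1 + j \<eta>2 v1 - j \<eta>2 v2 \<le> \<alpha>_j * norm (\<eta>1 - \<eta>2) * norm (v1 - v2)"
    and small: "\<alpha>_j < m_A"
begin

definition VI :: "'a \<Rightarrow> 'a \<Rightarrow> bool" where
  "VI g u \<longleftrightarrow> u \<in> K \<and> (\<forall>v\<in>K. inner (A u - g) (v - u) + j u v - j u u \<ge> 0)"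

lemma zero_K: "0 \<in> K"
  using K cone_contains_0 by blast

lemma two_K: "x \<in> K \<Longrightarrow> 2 *\<^sub>R x \<in> K"
  using K(4) mem_cone by fastforce

lemma j_zero: "j \<eta> 0 = 0"
  using j_homog[of 2 0 \<eta>] zero_K by simp

lemma j_two: "x \<in> K \<Longrightarrow> j \<eta> (2 *\<^sub>R x) = 2 * j \<eta> x"
  using j_homog[of 2 x \<eta>] by simp

lemma VI_lip:
  assumes "VI g1 u1" "VI g2 u2"
  shows "(m_A - \<alpha>_j) * norm (u1 - u2) \<le> norm (g1 - g2)"
proof -
  have u: "u1 \<in> K" "u2 \<in> K" using assms by (auto simp: VI_def)
  have 1: "inner (A u1 - g1) (u2 - u1) + j u1 u2 - j u1 u1 \<ge> 0" using assms u by (auto simp: VI_def)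
  have 2: "inner (A u2 - g2) (u1 - u2) + j u2 u1 - j u2 u2 \<ge> 0" using assms u by (auto simp: VI_def)
  have 3: "j u1 u2 - j u1 u1 + j u2 u1 - j u2 u2 \<le> \<alpha>_j * norm (u1 - u2) * norm (u1 - u2)"
    by (rule j_cross[OF u])
  have e: "inner (A u1 - g1) (u2 - u1) + inner (A u2 - g2) (u1 - u2)
      = inner (g1 - g2) (u1 - u2) - inner (A u1 - A u2) (u1 - u2)"
    by (simp add: inner_simps algebra_simps inner_commute)
  have 4: "inner (g1 - g2) (u1 - u2) \<le> norm (g1 - g2) * norm (u1 - u2)"
    by (rule norm_cauchy_schwarz)
  have 5: "m_A * (norm (u1 - u2))\<^sup>2 \<le> inner (A u1 - A u2) (u1 - u2)" by (rule A_mon)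
  have "(m_A - \<alpha>_j) * norm (u1 - u2) * norm (u1 - u2) \<le> norm (g1 - g2) * norm (u1 - u2)"
    using 1 2 3 4 5 e by (simp add: power2_eq_square algebra_simps)
  then show ?thesis
    by (cases "norm (u1 - u2) = 0") (auto simp: mult_right_le_imp_le)
qed

lemma VI_unique: "VI g u1 \<Longrightarrow> VI g u2 \<Longrightarrow> u1 = u2"
  using VI_lip[of g u1 g u2] small
  by (smt (verit, best) mult_le_0_iff norm_eq_zero norm_ge_zero right_minus_eq)

lemma lip_j: obtains Lj where "Lj-lipschitz_on K (j \<eta>)"
  using j_lip by blast

lemma prox_j:
  assumes "\<rho> > 0"
  shows "\<exists>p\<in>K. \<forall>v\<in>K. inner (p - z) (v - p) + \<rho> * j \<eta> v - \<rho> * j \<eta> p \<ge> 0"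
proof -
  obtain Lj where Lj: "Lj-lipschitz_on K (j \<eta>)" by (rule lip_j)
  have "(\<rho> * Lj)-lipschitz_on K (\<lambda>v. \<rho> * j \<eta> v)"
    by (rule lipschitz_on_cmult_real_nonneg[OF Lj]) (use assms in simp)
  moreover have "convex_on K (\<lambda>v. \<rho> * j \<eta> v)"
    by (rule convex_on_cmul) (use assms j_convex in auto)
  ultimately show ?thesis using prox_exists[OF K(1,2)] by blast
qed

end

lemma lin4:
  fixes a b c x r1 r2 r3 r4 C D R :: real
  shows "0 \<le> a + r1 - r2 \<Longrightarrow> 0 \<le> b + r3 - r4 \<Longrightarrow> a + b = c - x \<Longrightarrow> c \<le> C \<Longrightarrow>
     R \<le> D \<Longrightarrow> R = r1 - r2 + r3 - r4 \<Longrightarrow> x \<le> C + D"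
  by linarith

lemma lin_k:
  fixes a b x :: real
  shows "x / 2 \<le> (a - b) / 2 \<Longrightarrow> 1 - a + x / 2 + b \<le> 1 - (a - b) / 2"
  by (simp add: field_simps)

context vi_setting begin

lemma contr_const:
  defines "\<rho> \<equiv> (m_A - \<alpha>_j) / (L_A\<^sup>2 + m_A\<^sup>2)"
  shows "\<rho> > 0" "\<rho> * m_A \<le> 1" "\<rho> * L_A\<^sup>2 \<le> m_A - \<alpha>_j"
proof -
  have d: "L_A\<^sup>2 + m_A\<^sup>2 > 0" using mL by (simp add: add_pos_pos)
  show "\<rho> > 0" using small d by (simp add: \<rho>_def)
  have "(m_A - \<alpha>_j) * m_A \<le> m_A * m_A" using alpha mL by (simp add: mult_right_mono)
  also have "\<dots> \<le> L_A\<^sup>2 + m_A\<^sup>2" by (simp add: power2_eq_square)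
  finally show "\<rho> * m_A \<le> 1" using d by (simp add: \<rho>_def field_simps)
  have "(m_A - \<alpha>_j) * L_A\<^sup>2 \<le> (m_A - \<alpha>_j) * (L_A\<^sup>2 + m_A\<^sup>2)" using small by (simp add: mult_left_mono)
  then show "\<rho> * L_A\<^sup>2 \<le> m_A - \<alpha>_j" using d by (simp add: \<rho>_def pos_divide_le_eq)
qed

lemma VI_exists: "\<exists>u. VI g u"
proof -
  define \<rho> where "\<rho> = (m_A - \<alpha>_j) / (L_A\<^sup>2 + m_A\<^sup>2)"
  have \<rho>: "\<rho> > 0" "\<rho> * m_A \<le> 1" "\<rho> * L_A\<^sup>2 \<le> m_A - \<alpha>_j" using contr_const unfolding \<rho>_def by auto
  define z where "z w = w - \<rho> *\<^sub>R (A w - g)" for w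
  define T where "T w = (SOME p. p \<in> K \<and> (\<forall>v\<in>K. inner (p - z w) (v - p) + \<rho> * j w v - \<rho> * j w p \<ge> 0))" for w
  have T: "T w \<in> K \<and> (\<forall>v\<in>K. inner (T w - z w) (v - T w) + \<rho> * j w v - \<rho> * j w (T w) \<ge> 0)" for w
    unfolding T_def by (rule someI_ex) (use prox_j[OF \<rho>(1)] in blast)
  define \<kappa> where "\<kappa> = 1 - \<rho> * (m_A - \<alpha>_j) / 2"
  have \<kappa>: "0 \<le> \<kappa>" "\<kappa> < 1"
  proof -
    have "\<rho> * (m_A - \<alpha>_j) \<le> \<rho> * m_A" using \<rho>(1) alpha by (simp add: mult_left_mono)
    then show "0 \<le> \<kappa>" using \<rho>(2) by (simp add: \<kappa>_def)
    show "\<kappa> < 1" using \<rho>(1) small by (simp add: \<kappa>_def)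
  qed
  have contr: "dist (T w1) (T w2) \<le> \<kappa> * dist w1 w2" if w: "w1 \<in> K" "w2 \<in> K" for w1 w2
  proof -
    define p1 where "p1 = T w1"
    define p2 where "p2 = T w2"
    have p: "p1 \<in> K" "p2 \<in> K" using T unfolding p1_def p2_def by auto
    have i1: "inner (p1 - z w1) (p2 - p1) + \<rho> * j w1 p2 - \<rho> * j w1 p1 \<ge> 0"
      using T[of w1] p unfolding p1_def p2_def by auto
    have i2: "inner (p2 - z w2) (p1 - p2) + \<rho> * j w2 p1 - \<rho> * j w2 p2 \<ge> 0"
      using T[of w2] p unfolding p1_def p2_def by auto
    have cr: "j w1 p2 - j w1 p1 + j w2 p1 - j w2 p2 \<le> \<alpha>_j * norm (w1 - w2) * norm (p1 - p2)"
      by (rule j_cross[OF p])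
    have e: "inner (p1 - z w1) (p2 - p1) + inner (p2 - z w2) (p1 - p2)
       = inner (z w1 - z w2) (p1 - p2) - inner (p1 - p2) (p1 - p2)"
      by (simp add: inner_simps algebra_simps inner_commute)
    have cs: "inner (z w1 - z w2) (p1 - p2) \<le> norm (z w1 - z w2) * norm (p1 - p2)"
      by (rule norm_cauchy_schwarz)
    have "inner (p1 - p2) (p1 - p2) \<le> norm (z w1 - z w2) * norm (p1 - p2) + \<rho> * (\<alpha>_j * norm (w1 - w2) * norm (p1 - p2))"
    proof -
      have "\<rho> * (j w1 p2 - j w1 p1 + j w2 p1 - j w2 p2) \<le> \<rho> * (\<alpha>_j * norm (w1 - w2) * norm (p1 - p2))"
        by (rule mult_left_mono[OF cr]) (use \<rho>(1) in simp)
      moreover have "\<rho> * (j w1 p2 - j w1 p1 + j w2 p1 - j w2 p2) = \<rho> * j w1 p2 - \<rho> * j w1 p1 + \<rho> * j w2 p1 - \<rho> * j w2 p2"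
        by (simp add: algebra_simps)
      ultimately show ?thesis by (rule lin4[OF i1 i2 e cs])
    qed
    moreover have "inner (p1 - p2) (p1 - p2) = norm (p1 - p2) * norm (p1 - p2)"
      by (simp add: dot_square_norm power2_eq_square)
    moreover have "norm (z w1 - z w2) * norm (p1 - p2) + \<rho> * (\<alpha>_j * norm (w1 - w2) * norm (p1 - p2))
       = (norm (z w1 - z w2) + \<rho> * \<alpha>_j * norm (w1 - w2)) * norm (p1 - p2)"
      by (simp add: distrib_right mult.assoc)
    ultimately have sq: "norm (p1 - p2) * norm (p1 - p2) \<le> (norm (z w1 - z w2) + \<rho> * \<alpha>_j * norm (w1 - w2)) * norm (p1 - p2)"
      by metis
    have dp: "norm (p1 - p2) \<le> norm (z w1 - z w2) + \<rho> * \<alpha>_j * norm (w1 - w2)"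
    proof (cases "norm (p1 - p2) = 0")
      case True
      have "0 \<le> norm (z w1 - z w2) + \<rho> * \<alpha>_j * norm (w1 - w2)"
        by (intro add_nonneg_nonneg mult_nonneg_nonneg) (use \<rho>(1) alpha in auto)
      then show ?thesis using True by simp
    next
      case False
      then have "norm (p1 - p2) > 0" by simp
      with sq show ?thesis by (rule mult_right_le_imp_le)
    qed
    define w where "w = w1 - w2"
    define a where "a = A w1 - A w2"
    have zz: "z w1 - z w2 = w - \<rho> *\<^sub>R a" by (simp add: z_def w_def a_def algebra_simps)
    have nz: "(norm (z w1 - z w2))\<^sup>2 = (norm w)\<^sup>2 - 2 * \<rho> * inner w a + \<rho>\<^sup>2 * (norm a)\<^sup>2"
      unfolding zz using norm_add_scale_sq[of w "- \<rho>" a] by simp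
    have ma: "m_A * (norm w)\<^sup>2 \<le> inner w a" using A_mon[of w1 w2] by (simp add: w_def a_def inner_commute)
    have la: "norm a \<le> L_A * norm w" using A_lip[of w1 w2] by (simp add: w_def a_def)
    then have la2: "(norm a)\<^sup>2 \<le> L_A\<^sup>2 * (norm w)\<^sup>2"
      using power_mono[OF la norm_ge_zero, of 2] by (simp add: power_mult_distrib)
    define q where "q = 1 - \<rho> * m_A + \<rho>\<^sup>2 * L_A\<^sup>2 / 2"
    have q0: "q \<ge> 0"
    proof -
      have "\<rho>\<^sup>2 * L_A\<^sup>2 / 2 \<ge> 0" by simp
      then show ?thesis using \<rho>(2) by (simp add: q_def)
    qed
    have "(norm (z w1 - z w2))\<^sup>2 \<le> (1 - 2 * \<rho> * m_A + \<rho>\<^sup>2 * L_A\<^sup>2) * (norm w)\<^sup>2"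
    proof -
      have "2 * \<rho> * (m_A * (norm w)\<^sup>2) \<le> 2 * \<rho> * inner w a" using ma \<rho>(1) by simp
      moreover have "\<rho>\<^sup>2 * (norm a)\<^sup>2 \<le> \<rho>\<^sup>2 * (L_A\<^sup>2 * (norm w)\<^sup>2)" by (rule mult_left_mono[OF la2]) simp
      ultimately show ?thesis unfolding nz by (simp add: algebra_simps)
    qed
    also have "\<dots> \<le> (q * norm w)\<^sup>2"
    proof -
      have "q\<^sup>2 - (1 - 2 * \<rho> * m_A + \<rho>\<^sup>2 * L_A\<^sup>2) = (\<rho> * m_A - \<rho>\<^sup>2 * L_A\<^sup>2 / 2)\<^sup>2"
        unfolding q_def power2_eq_square by (simp add: field_simps)
      then have "(1 - 2 * \<rho> * m_A + \<rho>\<^sup>2 * L_A\<^sup>2) \<le> q\<^sup>2" by (smt (verit) zero_le_power2)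
      then have "(1 - 2 * \<rho> * m_A + \<rho>\<^sup>2 * L_A\<^sup>2) * (norm w)\<^sup>2 \<le> q\<^sup>2 * (norm w)\<^sup>2"
        by (rule mult_right_mono) simp
      then show ?thesis by (simp add: power_mult_distrib)
    qed
    finally have "norm (z w1 - z w2) \<le> q * norm w"
      by (rule power2_le_imp_le) (use q0 in simp)
    with dp have "norm (p1 - p2) \<le> (q + \<rho> * \<alpha>_j) * norm w" by (simp add: algebra_simps w_def)
    also have "\<dots> \<le> \<kappa> * norm w"
    proof -
      have "\<rho>\<^sup>2 * L_A\<^sup>2 / 2 \<le> \<rho> * (m_A - \<alpha>_j) / 2"
      proof -
        have "\<rho> * (\<rho> * L_A\<^sup>2) \<le> \<rho> * (m_A - \<alpha>_j)" by (rule mult_left_mono[OF \<rho>(3)]) (use \<rho>(1) in simp)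
        then have "\<rho>\<^sup>2 * L_A\<^sup>2 \<le> \<rho> * (m_A - \<alpha>_j)" by (simp add: power2_eq_square mult.assoc)
        then show ?thesis by simp
      qed
      then have "q + \<rho> * \<alpha>_j \<le> \<kappa>" unfolding q_def \<kappa>_def right_diff_distrib by (rule lin_k)
      then show ?thesis by (rule mult_right_mono) simp
    qed
    finally show ?thesis by (simp add: p1_def p2_def w_def dist_norm)
  qed
  have "\<exists>!x\<in>K. T x = x"
    by (rule Banach_fix[OF _ K(1) \<kappa>]) (use K(2) complete_eq_closed T contr in auto)
  then obtain u where u: "u \<in> K" "T u = u" by blast
  have "VI g u" unfolding VI_def
  proof (intro conjI ballI)
    fix v assume v: "v \<in> K"
    have "inner (T u - z u) (v - T u) + \<rho> * j u v - \<rho> * j u (T u) \<ge> 0" using T v by blast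
    then have "\<rho> * (inner (A u - g) (v - u) + j u v - j u u) \<ge> 0"
      unfolding u(2) by (simp add: z_def inner_simps algebra_simps)
    then show "inner (A u - g) (v - u) + j u v - j u u \<ge> 0" using \<rho>(1) by (simp add: zero_le_mult_iff)
  qed (rule u(1))
  then show ?thesis by blast
qed

definition P :: "'a \<Rightarrow> 'a" where "P g = (THE u. VI g u)"

lemma P_VI: "VI g (P g)"
  unfolding P_def using VI_exists VI_unique by (metis theI)

lemma P_eq: "VI g u \<Longrightarrow> u = P g"
  using P_VI VI_unique by blast

lemma P_K: "P g \<in> K" using P_VI by (simp add: VI_def)

lemma P_lip: "norm (P g1 - P g2) \<le> (1 / (m_A - \<alpha>_j)) * norm (g1 - g2)"
  using VI_lip[OF P_VI P_VI, of g1 g2] small by (simp add: field_simps)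

end

lemma Cset_iff: "\<xi> \<in> Cset K j \<eta> \<longleftrightarrow> (\<forall>v\<in>K. inner \<xi> v \<le> j \<eta> v)"
  unfolding Cset_def Jext_def by auto

lemma NC_iff:
  "(- u \<in> normal_cone (Cset_t K j f u t) x) \<longleftrightarrow>
   (f t - x \<in> Cset K j u \<and> (\<forall>\<xi>\<in>Cset K j u. inner u \<xi> \<le> inner u (f t - x)))"
proof -
  have mem: "x \<in> (\<lambda>\<xi>. f t - \<xi>) ` Cset K j u \<longleftrightarrow> f t - x \<in> Cset K j u"
  proof
    assume "x \<in> (\<lambda>\<xi>. f t - \<xi>) ` Cset K j u"
    then obtain \<xi> where "\<xi> \<in> Cset K j u" "x = f t - \<xi>" by blast
    then show "f t - x \<in> Cset K j u" by simp
  next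
    assume "f t - x \<in> Cset K j u"
    moreover have "x = f t - (f t - x)" by simp
    ultimately show "x \<in> (\<lambda>\<xi>. f t - \<xi>) ` Cset K j u" by (rule rev_image_eqI)
  qed
  have all: "(\<forall>w\<in>(\<lambda>\<xi>. f t - \<xi>) ` Cset K j u. inner (- u) (w - x) \<le> 0) \<longleftrightarrow>
     (\<forall>\<xi>\<in>Cset K j u. inner u \<xi> \<le> inner u (f t - x))"
  proof -
    have e: "inner (- u) ((f t - \<xi>) - x) \<le> 0 \<longleftrightarrow> inner u \<xi> \<le> inner u (f t - x)" for \<xi>
    proof -
      have "inner (- u) ((f t - \<xi>) - x) = inner u \<xi> - inner u (f t - x)"
        by (simp add: inner_diff_right inner_minus_left)
      then show ?thesis by simp
    qed
    have "(\<forall>w\<in>(\<lambda>\<xi>. f t - \<xi>) ` Cset K j u. inner (- u) (w - x) \<le> 0) \<longleftrightarrow>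
      (\<forall>\<xi>\<in>Cset K j u. inner (- u) ((f t - \<xi>) - x) \<le> 0)" by blast
    then show ?thesis using e by simp
  qed
  show ?thesis unfolding normal_cone_def Cset_t_def using mem all by auto
qed

context vi_setting begin

lemma sup_approx:
  assumes u: "u \<in> K" and Lu: "Lu-lipschitz_on K (j u)" and lam: "lam > 0"
  shows "\<exists>\<xi>\<in>Cset K j u. inner \<xi> u \<ge> j u u - lam * Lu\<^sup>2"
proof -
  obtain p where p: "p \<in> K" and pv: "\<And>v. v \<in> K \<Longrightarrow> inner (p - u) (v - p) + lam * j u v - lam * j u p \<ge> 0"
    using prox_j[OF lam, of u u] by blast
  define \<xi> where "\<xi> = (1 / lam) *\<^sub>R (u - p)"
  have xv: "inner \<xi> (v - p) \<le> j u v - j u p" if v: "v \<in> K" for v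
  proof -
    have "lam * (inner \<xi> (v - p)) = inner (u - p) (v - p)" using lam by (simp add: \<xi>_def)
    also have "\<dots> \<le> lam * j u v - lam * j u p" using pv[OF v] by (simp add: inner_simps)
    finally have "lam * (inner \<xi> (v - p)) \<le> lam * (j u v - j u p)" by (simp add: algebra_simps)
    then show ?thesis using lam by simp
  qed
  have x1: "inner \<xi> p \<ge> j u p" using xv[OF zero_K] by (simp add: j_zero inner_simps)
  have x2: "inner \<xi> p \<le> j u p"
  proof -
    have "inner \<xi> (2 *\<^sub>R p - p) \<le> j u (2 *\<^sub>R p) - j u p" by (rule xv[OF two_K[OF p]])
    moreover have "2 *\<^sub>R p - p = p" by (simp add: scaleR_2)
    ultimately show ?thesis unfolding j_two[OF p] by simp
  qed
  have "\<xi> \<in> Cset K j u" unfolding Cset_iff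
  proof
    fix v assume v: "v \<in> K"
    have "inner \<xi> v - inner \<xi> p \<le> j u v - j u p" using xv[OF v] by (simp add: inner_simps)
    then show "inner \<xi> v \<le> j u v" using x1 x2 by simp
  qed
  moreover have "inner \<xi> u \<ge> j u u - lam * Lu\<^sup>2"
  proof -
    have L0: "Lu \<ge> 0" using Lu by (simp add: lipschitz_on_def)
    have ld: "dist (j u u) (j u p) \<le> Lu * dist u p" by (rule lipschitz_onD[OF Lu u p])
    then have jl: "j u u - j u p \<le> Lu * norm (u - p)" by (simp add: dist_norm dist_real_def)
    have "inner (p - u) (u - p) + lam * j u u - lam * j u p \<ge> 0" by (rule pv[OF u])
    moreover have "inner (p - u) (u - p) = - (norm (u - p))\<^sup>2"
      by (simp add: dot_square_norm[symmetric] inner_simps inner_commute)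
    ultimately have "(norm (u - p))\<^sup>2 \<le> lam * (j u u - j u p)" by (simp add: algebra_simps)
    also have "\<dots> \<le> lam * (Lu * norm (u - p))" by (rule mult_left_mono[OF jl]) (use lam in simp)
    finally have nn: "norm (u - p) * norm (u - p) \<le> (lam * Lu) * norm (u - p)" by (simp add: power2_eq_square mult.assoc)
    have nup: "norm (u - p) \<le> lam * Lu"
    proof (cases "norm (u - p) = 0")
      case True then show ?thesis using lam L0 by simp
    next
      case False then have "norm (u - p) > 0" by simp
      with nn show ?thesis by (rule mult_right_le_imp_le)
    qed
    have "inner \<xi> u = inner \<xi> p + inner \<xi> (u - p)" by (simp add: inner_simps)
    also have "inner \<xi> (u - p) = (1 / lam) * (norm (u - p))\<^sup>2"
      by (simp add: \<xi>_def dot_square_norm)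
    finally have eq: "inner \<xi> u = inner \<xi> p + (1 / lam) * (norm (u - p))\<^sup>2" .
    have "0 \<le> (1 / lam) * (norm (u - p))\<^sup>2" using lam by simp
    then have "inner \<xi> u \<ge> j u p" using x1 eq by linarith
    moreover have "j u u - j u p \<le> lam * Lu\<^sup>2"
    proof -
      have "Lu * norm (u - p) \<le> Lu * (lam * Lu)" by (rule mult_left_mono[OF nup L0])
      then show ?thesis using jl by (simp add: power2_eq_square algebra_simps)
    qed
    ultimately show ?thesis by simp
  qed
  ultimately show ?thesis by blast
qed

lemma VI_iff_NC:
  assumes u: "u \<in> K"
  shows "VI (f t - s) u \<longleftrightarrow> - u \<in> normal_cone (Cset_t K j f u t) (A u + s)"
proof -
  define \<xi>0 where "\<xi>0 = f t - s - A u"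
  have fx: "f t - (A u + s) = \<xi>0" by (simp add: \<xi>0_def algebra_simps)
  have vi: "VI (f t - s) u \<longleftrightarrow> (\<forall>v\<in>K. inner \<xi>0 (v - u) \<le> j u v - j u u)"
  proof -
    have "inner (A u - (f t - s)) (v - u) = - inner \<xi>0 (v - u)" for v
      by (simp add: \<xi>0_def inner_simps algebra_simps)
    then show ?thesis unfolding VI_def using u by auto
  qed
  show ?thesis unfolding NC_iff fx vi
  proof
    assume h: "\<forall>v\<in>K. inner \<xi>0 (v - u) \<le> j u v - j u u"
    have a: "inner \<xi>0 u \<ge> j u u" using h zero_K by (auto simp: j_zero inner_simps)
    have b: "inner \<xi>0 u \<le> j u u"
    proof -
      have "inner \<xi>0 (2 *\<^sub>R u - u) \<le> j u (2 *\<^sub>R u) - j u u" using h two_K[OF u] by blast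
      moreover have "2 *\<^sub>R u - u = u" by (simp add: scaleR_2)
      ultimately show ?thesis unfolding j_two[OF u] by simp
    qed
    have c: "\<xi>0 \<in> Cset K j u" unfolding Cset_iff
    proof
      fix v assume v: "v \<in> K"
      have "inner \<xi>0 v - inner \<xi>0 u \<le> j u v - j u u" using h v by (simp add: inner_simps)
      then show "inner \<xi>0 v \<le> j u v" using a b by simp
    qed
    have "inner u \<xi> \<le> inner u \<xi>0" if "\<xi> \<in> Cset K j u" for \<xi>
    proof -
      have "inner \<xi> u \<le> j u u" using that u unfolding Cset_iff by blast
      then show ?thesis using a b by (simp add: inner_commute)
    qed
    with c show "\<xi>0 \<in> Cset K j u \<and> (\<forall>\<xi>\<in>Cset K j u. inner u \<xi> \<le> inner u \<xi>0)" by blast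
  next
    assume h: "\<xi>0 \<in> Cset K j u \<and> (\<forall>\<xi>\<in>Cset K j u. inner u \<xi> \<le> inner u \<xi>0)"
    obtain Lu where Lu: "Lu-lipschitz_on K (j u)" by (rule lip_j)
    have ge: "inner \<xi>0 u \<ge> j u u"
    proof (rule small_quad_nonneg[where b = "Lu\<^sup>2", THEN iffD1[OF le_diff_eq], simplified])
      fix lam :: real assume lam: "0 < lam" "lam \<le> 1"
      obtain \<xi> where \<xi>: "\<xi> \<in> Cset K j u" "inner \<xi> u \<ge> j u u - lam * Lu\<^sup>2"
        using sup_approx[OF u Lu lam(1)] by blast
      have "inner u \<xi> \<le> inner u \<xi>0" using h \<xi>(1) by blast
      then show "0 \<le> inner \<xi>0 u - j u u + lam * Lu\<^sup>2" using \<xi>(2) by (simp add: inner_commute)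
    qed
    show "\<forall>v\<in>K. inner \<xi>0 (v - u) \<le> j u v - j u u"
    proof
      fix v assume v: "v \<in> K"
      have "inner \<xi>0 v \<le> j u v" using h v unfolding Cset_iff by blast
      then show "inner \<xi>0 (v - u) \<le> j u v - j u u" using ge by (simp add: inner_simps)
    qed
  qed
qed

end

lemma exp_int_bound:
  fixes \<beta> t :: real
  assumes b: "\<beta> > 0" and t: "t \<ge> 0"
  shows "(\<lambda>s. exp (\<beta> * s)) integrable_on {0..t}"
    and "integral {0..t} (\<lambda>s. exp (\<beta> * s)) \<le> exp (\<beta> * t) / \<beta>"
proof -
  have d: "((\<lambda>s. exp (\<beta> * s) / \<beta>) has_vector_derivative exp (\<beta> * s)) (at s within {0..t})" for s
  proof -
    have "((\<lambda>s. exp (\<beta> * s) / \<beta>) has_real_derivative (exp (\<beta> * s) * (\<beta> * 1)) / \<beta>) (at s within {0..t})"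
      by (intro derivative_eq_intros) (use b in auto)
    then show ?thesis using b by (simp add: has_real_derivative_iff_has_vector_derivative)
  qed
  have hi: "((\<lambda>s. exp (\<beta> * s)) has_integral (exp (\<beta> * t) / \<beta> - exp (\<beta> * 0) / \<beta>)) {0..t}"
    by (rule fundamental_theorem_of_calculus[OF t d])
  then show "(\<lambda>s. exp (\<beta> * s)) integrable_on {0..t}" by blast
  have "integral {0..t} (\<lambda>s. exp (\<beta> * s)) = exp (\<beta> * t) / \<beta> - 1 / \<beta>"
    using integral_unique[OF hi] by simp
  then show "integral {0..t} (\<lambda>s. exp (\<beta> * s)) \<le> exp (\<beta> * t) / \<beta>" using b by simp
qed

lemma gronwall_zero:
  fixes \<phi> :: "real \<Rightarrow> real"
  assumes cont: "continuous_on {0..T} \<phi>" and nn: "\<And>t. t \<in> {0..T} \<Longrightarrow> \<phi> t \<ge> 0"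
    and C: "C > 0"
    and ineq: "\<And>t. t \<in> {0..T} \<Longrightarrow> \<phi> t \<le> C * integral {0..t} \<phi>"
  shows "\<And>t. t \<in> {0..T} \<Longrightarrow> \<phi> t = 0"
proof -
  fix t0 assume t0: "t0 \<in> {0..T}"
  define \<beta> where "\<beta> = 2 * C"
  have b: "\<beta> > 0" using C by (simp add: \<beta>_def)
  define \<psi> where "\<psi> s = \<phi> s * exp (- \<beta> * s)" for s
  have pc: "continuous_on {0..T} \<psi>" unfolding \<psi>_def by (intro continuous_intros cont)
  obtain x0 where x0: "x0 \<in> {0..T}" and mx: "\<And>y. y \<in> {0..T} \<Longrightarrow> \<psi> y \<le> \<psi> x0"
    using continuous_attains_sup[OF compact_Icc _ pc] t0 by fastforce
  define M where "M = \<psi> x0"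
  have M0: "M \<ge> 0" using nn[OF x0] by (simp add: M_def \<psi>_def)
  have phb: "\<phi> s \<le> M * exp (\<beta> * s)" if s: "s \<in> {0..T}" for s
  proof -
    have "\<psi> s \<le> M" using mx[OF s] by (simp add: M_def)
    then have "\<psi> s * exp (\<beta> * s) \<le> M * exp (\<beta> * s)"
      by (rule mult_right_mono) simp
    moreover have "\<psi> s * exp (\<beta> * s) = \<phi> s"
      by (simp add: \<psi>_def mult.assoc flip: exp_add)
    ultimately show ?thesis by simp
  qed
  have half: "\<psi> t \<le> M / 2" if t: "t \<in> {0..T}" for t
  proof -
    have sub: "{0..t} \<subseteq> {0..T}" using t by auto
    have t0': "t \<ge> 0" using t by simp
    have i1: "\<phi> integrable_on {0..t}"
      by (rule integrable_continuous_interval[OF continuous_on_subset[OF cont sub]])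
    have i2: "(\<lambda>s. M * exp (\<beta> * s)) integrable_on {0..t}"
      using integrable_on_cmult_left[OF exp_int_bound(1)[OF b t0']] by simp
    have "integral {0..t} \<phi> \<le> integral {0..t} (\<lambda>s. M * exp (\<beta> * s))"
      by (rule integral_le[OF i1 i2]) (use phb sub in auto)
    also have "\<dots> = M * integral {0..t} (\<lambda>s. exp (\<beta> * s))" by simp
    also have "\<dots> \<le> M * (exp (\<beta> * t) / \<beta>)"
      by (rule mult_left_mono[OF exp_int_bound(2)[OF b t0'] M0])
    finally have "C * integral {0..t} \<phi> \<le> C * (M * (exp (\<beta> * t) / \<beta>))"
      by (rule mult_left_mono) (use C in simp)
    also have "\<dots> = M * exp (\<beta> * t) / 2" using C by (simp add: \<beta>_def)
    finally have "\<phi> t \<le> M * exp (\<beta> * t) / 2" using ineq[OF t] by simp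
    then have "\<phi> t * exp (- \<beta> * t) \<le> M * exp (\<beta> * t) / 2 * exp (- \<beta> * t)"
      by (rule mult_right_mono) simp
    also have "\<dots> = M / 2" by (simp flip: exp_add)
    finally show ?thesis by (simp add: \<psi>_def)
  qed
  have "M \<le> M / 2" using half[OF x0] by (simp add: M_def)
  then have "M \<le> 0" by simp
  then have "\<psi> t0 \<le> 0" using mx[OF t0] by (simp add: M_def)
  then have "\<phi> t0 \<le> 0" by (simp add: \<psi>_def mult_le_0_iff)
  then show "\<phi> t0 = 0" using nn[OF t0] by simp
qed

locale hist_setting =
  fixes I :: "real set"
    and S :: "(real \<Rightarrow> 'a::{real_inner, complete_space}) \<Rightarrow> (real \<Rightarrow> 'a)"
    and f :: "real \<Rightarrow> 'a"
    and Pm :: "'a \<Rightarrow> 'a"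
    and c :: real
  assumes f: "continuous_on I f"
    and S_maps: "\<And>u. continuous_on I u \<Longrightarrow> continuous_on I (S u)"
    and S_hist: "history_dependent I S"
    and Pm_lip: "\<And>g1 g2. norm (Pm g1 - Pm g2) \<le> c * norm (g1 - g2)"
    and c: "c > 0"
begin

lemma hist_L:
  assumes "{0..T} \<subseteq> I"
  obtains L where "L > 0" "\<And>u1 u2 t. continuous_on I u1 \<Longrightarrow> continuous_on I u2 \<Longrightarrow> t \<in> {0..T} \<Longrightarrow>
      norm (S u1 t - S u2 t) \<le> L * integral {0..t} (\<lambda>s. norm (u1 s - u2 s))"
  using S_hist assms unfolding history_dependent_def by (meson compact_Icc)

lemma Pm_cont: "continuous_on UNIV Pm"
proof -
  have "c-lipschitz_on UNIV Pm"
    by (rule lipschitz_onI) (use Pm_lip c in \<open>auto simp: dist_norm\<close>)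
  then show ?thesis by (rule lipschitz_on_continuous_on)
qed

lemma Pm_step: "norm (Pm (g - a) - Pm (g - b)) \<le> c * norm (a - b)"
proof -
  have "norm (Pm (g - a) - Pm (g - b)) \<le> c * norm ((g - a) - (g - b))" by (rule Pm_lip)
  also have "(g - a) - (g - b) = b - a" by simp
  finally show ?thesis by (simp add: norm_minus_commute)
qed

lemma sol_unique_T:
  assumes sub: "{0..T} \<subseteq> I" and c1: "continuous_on I u1" and c2: "continuous_on I u2"
    and e1: "\<And>t. t \<in> {0..T} \<Longrightarrow> u1 t = Pm (f t - S u1 t)"
    and e2: "\<And>t. t \<in> {0..T} \<Longrightarrow> u2 t = Pm (f t - S u2 t)"
  shows "\<And>t. t \<in> {0..T} \<Longrightarrow> u1 t = u2 t"
proof -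
  obtain L where L: "L > 0" and hL: "\<And>u1 u2 t. continuous_on I u1 \<Longrightarrow> continuous_on I u2 \<Longrightarrow> t \<in> {0..T} \<Longrightarrow>
      norm (S u1 t - S u2 t) \<le> L * integral {0..t} (\<lambda>s. norm (u1 s - u2 s))"
    using hist_L[OF sub] by blast
  have cont: "continuous_on {0..T} (\<lambda>s. norm (u1 s - u2 s))"
    by (intro continuous_intros continuous_on_subset[OF c1 sub] continuous_on_subset[OF c2 sub])
  have "\<And>t. t \<in> {0..T} \<Longrightarrow> norm (u1 t - u2 t) = 0"
  proof (rule gronwall_zero[OF cont _ _ ])
    show "0 < c * L" using c L by simp
    fix t assume t: "t \<in> {0..T}"
    show "0 \<le> norm (u1 t - u2 t)" by simp
    have "norm (u1 t - u2 t) = norm (Pm (f t - S u1 t) - Pm (f t - S u2 t))" using e1[OF t] e2[OF t] by simp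
    also have "\<dots> \<le> c * norm (S u1 t - S u2 t)" by (rule Pm_step)
    also have "\<dots> \<le> c * (L * integral {0..t} (\<lambda>s. norm (u1 s - u2 s)))"
      by (rule mult_left_mono[OF hL[OF c1 c2 t]]) (use c in simp)
    finally show "norm (u1 t - u2 t) \<le> c * L * integral {0..t} (\<lambda>s. norm (u1 s - u2 s))"
      by (simp add: mult.assoc)
  qed
  then show "\<And>t. t \<in> {0..T} \<Longrightarrow> u1 t = u2 t" by simp
qed

lemma causal:
  assumes sub: "{0..T} \<subseteq> I" and t: "t \<in> {0..T}" and c1: "continuous_on I u1" and c2: "continuous_on I u2"
    and eq: "\<And>s. s \<in> {0..t} \<Longrightarrow> u1 s = u2 s"
  shows "S u1 t = S u2 t"
proof -
  obtain L where L: "L > 0" and hL: "\<And>u1 u2 t. continuous_on I u1 \<Longrightarrow> continuous_on I u2 \<Longrightarrow> t \<in> {0..T} \<Longrightarrow>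
      norm (S u1 t - S u2 t) \<le> L * integral {0..t} (\<lambda>s. norm (u1 s - u2 s))"
    using hist_L[OF sub] by blast
  have "integral {0..t} (\<lambda>s. norm (u1 s - u2 s)) = integral {0..t} (\<lambda>s. 0::real)"
    by (rule integral_cong) (simp add: eq)
  then have "norm (S u1 t - S u2 t) \<le> 0" using hL[OF c1 c2 t] by simp
  then show ?thesis by simp
qed

end

context hist_setting begin

lemma sol_exists_T:
  assumes T: "T \<ge> 0" and sub: "{0..T} \<subseteq> I"
  shows "\<exists>u. continuous_on UNIV u \<and> (\<forall>t\<in>{0..T}. u t = Pm (f t - S u t))"
proof -
  obtain L where L: "L > 0" and hL: "\<And>u1 u2 t. continuous_on I u1 \<Longrightarrow> continuous_on I u2 \<Longrightarrow> t \<in> {0..T} \<Longrightarrow>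
      norm (S u1 t - S u2 t) \<le> L * integral {0..t} (\<lambda>s. norm (u1 s - u2 s))"
    using hist_L[OF sub] by blast
  define cl where "cl t = max 0 (min t T)" for t :: real
  have cl_cont: "continuous_on UNIV cl" unfolding cl_def by (intro continuous_intros)
  have cl_in: "cl t \<in> {0..T}" for t using T by (auto simp: cl_def)
  have cl_id: "t \<in> {0..T} \<Longrightarrow> cl t = t" for t by (auto simp: cl_def)
  define \<beta> where "\<beta> = 2 * c * L"
  have b: "\<beta> > 0" using c L by (simp add: \<beta>_def)
  define E where "E F = (\<lambda>s. exp (\<beta> * cl s) *\<^sub>R apply_bcontfun F s)" for F :: "real \<Rightarrow>\<^sub>C 'a"
  have E_cont: "continuous_on UNIV (E F)" for F
    unfolding E_def by (intro continuous_intros continuous_on_compose2[OF continuous_on_exp cl_cont] continuous_on_mult_left) auto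
  have E_contI: "continuous_on I (E F)" for F by (rule continuous_on_subset[OF E_cont]) simp
  define h where "h F \<tau> = exp (- \<beta> * \<tau>) *\<^sub>R Pm (f \<tau> - S (E F) \<tau>)" for F \<tau>
  have h_cont: "continuous_on {0..T} (h F)" for F
  proof -
    have "continuous_on {0..T} (\<lambda>\<tau>. f \<tau> - S (E F) \<tau>)"
      by (intro continuous_intros continuous_on_subset[OF f sub] continuous_on_subset[OF S_maps[OF E_contI] sub])
    then have "continuous_on {0..T} (\<lambda>\<tau>. Pm (f \<tau> - S (E F) \<tau>))"
      by (rule continuous_on_compose2[OF Pm_cont]) simp
    then show ?thesis unfolding h_def by (intro continuous_intros)
  qed
  have inb: "(\<lambda>t. h F (cl t)) \<in> bcontfun" for F
  proof -
    have "continuous_on UNIV (\<lambda>t. h F (cl t))"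
      by (rule continuous_on_compose2[OF h_cont[of F] cl_cont]) (use cl_in in auto)
    moreover have "bounded (range (\<lambda>t. h F (cl t)))"
    proof (rule bounded_subset)
      show "bounded (h F ` {0..T})"
        by (rule compact_imp_bounded[OF compact_continuous_image[OF h_cont compact_Icc]])
      show "range (\<lambda>t. h F (cl t)) \<subseteq> h F ` {0..T}" using cl_in by auto
    qed
    ultimately show ?thesis unfolding bcontfun_def by simp
  qed
  define \<Psi> where "\<Psi> F = Bcontfun (\<lambda>t. h F (cl t))" for F
  have \<Psi>_app: "apply_bcontfun (\<Psi> F) t = h F (cl t)" for F t
    unfolding \<Psi>_def using Bcontfun_inverse[OF inb] by simp
  have contr: "dist (\<Psi> F1) (\<Psi> F2) \<le> (1/2) * dist F1 F2" for F1 F2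
  proof (rule dist_bound)
    fix t
    define \<tau> where "\<tau> = cl t"
    have \<tau>: "\<tau> \<in> {0..T}" using cl_in by (simp add: \<tau>_def)
    define d where "d = dist F1 F2"
    have d0: "d \<ge> 0" by (simp add: d_def)
    have sub\<tau>: "{0..\<tau>} \<subseteq> {0..T}" using \<tau> by auto
    have \<tau>0: "\<tau> \<ge> 0" using \<tau> by simp
    have pw: "norm (E F1 s - E F2 s) \<le> d * exp (\<beta> * s)" if s: "s \<in> {0..\<tau>}" for s
    proof -
      have cs: "cl s = s" using s sub\<tau> cl_id by auto
      have "E F1 s - E F2 s = exp (\<beta> * s) *\<^sub>R (apply_bcontfun F1 s - apply_bcontfun F2 s)"
        by (simp add: E_def cs scaleR_diff_right)
      then have "norm (E F1 s - E F2 s) = exp (\<beta> * s) * dist (apply_bcontfun F1 s) (apply_bcontfun F2 s)"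
        by (simp add: dist_norm)
      also have "\<dots> \<le> exp (\<beta> * s) * d"
        by (rule mult_left_mono) (simp_all add: d_def dist_bounded)
      finally show ?thesis by (simp add: mult.commute)
    qed
    have int1: "(\<lambda>s. norm (E F1 s - E F2 s)) integrable_on {0..\<tau>}"
      by (rule integrable_continuous_interval)
         (intro continuous_intros continuous_on_subset[OF E_cont] subset_UNIV)
    have int2: "(\<lambda>s. d * exp (\<beta> * s)) integrable_on {0..\<tau>}"
      using integrable_on_cmult_left[OF exp_int_bound(1)[OF b \<tau>0]] by simp
    have "integral {0..\<tau>} (\<lambda>s. norm (E F1 s - E F2 s)) \<le> integral {0..\<tau>} (\<lambda>s. d * exp (\<beta> * s))"
      by (rule integral_le[OF int1 int2 pw])
    also have "\<dots> = d * integral {0..\<tau>} (\<lambda>s. exp (\<beta> * s))" by simp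
    also have "\<dots> \<le> d * (exp (\<beta> * \<tau>) / \<beta>)"
      by (rule mult_left_mono[OF exp_int_bound(2)[OF b \<tau>0] d0])
    finally have I1: "integral {0..\<tau>} (\<lambda>s. norm (E F1 s - E F2 s)) \<le> d * (exp (\<beta> * \<tau>) / \<beta>)" .
    have "dist (apply_bcontfun (\<Psi> F1) t) (apply_bcontfun (\<Psi> F2) t) = norm (h F1 \<tau> - h F2 \<tau>)"
      by (simp add: \<Psi>_app \<tau>_def dist_norm)
    also have "\<dots> = exp (- \<beta> * \<tau>) * norm (Pm (f \<tau> - S (E F1) \<tau>) - Pm (f \<tau> - S (E F2) \<tau>))"
      by (simp add: h_def flip: scaleR_diff_right)
    also have "\<dots> \<le> exp (- \<beta> * \<tau>) * (c * norm (S (E F1) \<tau> - S (E F2) \<tau>))"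
      by (rule mult_left_mono[OF Pm_step]) simp
    also have "\<dots> \<le> exp (- \<beta> * \<tau>) * (c * (L * integral {0..\<tau>} (\<lambda>s. norm (E F1 s - E F2 s))))"
      by (intro mult_left_mono hL[OF E_contI E_contI \<tau>]) (use c in auto)
    also have "\<dots> \<le> exp (- \<beta> * \<tau>) * (c * (L * (d * (exp (\<beta> * \<tau>) / \<beta>))))"
      by (intro mult_left_mono I1) (use c L in auto)
    also have "\<dots> = (1/2) * d"
    proof -
      have "exp (- \<beta> * \<tau>) * exp (\<beta> * \<tau>) = 1" by (simp flip: exp_add)
      then show ?thesis using c L by (simp add: \<beta>_def field_simps)
    qed
    finally show "dist (apply_bcontfun (\<Psi> F1) t) (apply_bcontfun (\<Psi> F2) t) \<le> 1 / 2 * dist F1 F2"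
      by (simp add: d_def)
  qed
  obtain F where F: "\<Psi> F = F" using banach_fix_type[of "1/2" \<Psi>] contr by auto
  define u where "u = E F"
  have "u t = Pm (f t - S u t)" if t: "t \<in> {0..T}" for t
  proof -
    have "u t = exp (\<beta> * t) *\<^sub>R apply_bcontfun (\<Psi> F) t" by (simp add: u_def E_def cl_id[OF t] F)
    also have "\<dots> = exp (\<beta> * t) *\<^sub>R (exp (- \<beta> * t) *\<^sub>R Pm (f t - S u t))"
      by (simp add: \<Psi>_app cl_id[OF t] h_def u_def)
    also have "\<dots> = Pm (f t - S u t)" by (simp flip: exp_add)
    finally show ?thesis .
  qed
  moreover have "continuous_on UNIV u" unfolding u_def by (rule E_cont)
  ultimately show ?thesis by blast
qed

end

context hist_setting begin

lemma sol_exists: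
  assumes I: "(\<exists>T>0. I = {0..T}) \<or> I = {0..}"
  shows "\<exists>u. continuous_on I u \<and> (\<forall>t\<in>I. u t = Pm (f t - S u t))"
  using I
proof
  assume "\<exists>T>0. I = {0..T}"
  then obtain T where T: "T > 0" "I = {0..T}" by blast
  obtain u where u: "continuous_on UNIV u" "\<forall>t\<in>{0..T}. u t = Pm (f t - S u t)"
    using sol_exists_T[of T] T by auto
  then show ?thesis using T continuous_on_subset[OF u(1)] by blast
next
  assume I0: "I = {0..}"
  have "\<exists>v. continuous_on UNIV v \<and> (\<forall>t\<in>{0..real n}. v t = Pm (f t - S v t))" for n :: nat
    by (rule sol_exists_T) (auto simp: I0)
  then obtain U where Uc: "\<And>n. continuous_on UNIV (U n)"
    and Ue: "\<And>n t. t \<in> {0..real n} \<Longrightarrow> U n t = Pm (f t - S (U n) t)" by metis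
  have UcI: "continuous_on I (U n)" for n using continuous_on_subset[OF Uc] by blast
  have agree: "U n s = U k s" if "s \<in> {0..real n}" "n \<le> k" for n k s
  proof -
    have sub: "{0..real n} \<subseteq> I" by (auto simp: I0)
    have "\<And>t. t \<in> {0..real n} \<Longrightarrow> U n t = U k t"
    proof (rule sol_unique_T[OF sub UcI UcI])
      fix t assume t: "t \<in> {0..real n}"
      show "U n t = Pm (f t - S (U n) t)" by (rule Ue[OF t])
      have "t \<in> {0..real k}" using t that(2) by auto
      then show "U k t = Pm (f t - S (U k) t)" by (rule Ue)
    qed
    then show ?thesis using that(1) by blast
  qed
  define u where "u t = U (nat \<lceil>t\<rceil>) t" for t
  have uN: "u t = U N t" if t: "t \<in> {0..real N}" for t N
  proof -
    have t0: "t \<ge> 0" "t \<le> real N" using t by auto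
    have "t \<le> real (nat \<lceil>t\<rceil>)" using t0 by linarith
    moreover have "nat \<lceil>t\<rceil> \<le> N" using t0 by (simp add: nat_le_iff ceiling_le_iff)
    ultimately show ?thesis unfolding u_def using agree[of t "nat \<lceil>t\<rceil>" N] t0 by auto
  qed
  have ucont: "continuous_on I u"
    unfolding continuous_on_eq_continuous_within
  proof
    fix x assume x: "x \<in> I"
    define N where "N = nat \<lceil>x\<rceil> + 1"
    have xN: "x < real N" unfolding N_def by linarith
    have x0: "x \<ge> 0" using x by (simp add: I0)
    have "continuous_on {0..real N} (U N)" using continuous_on_subset[OF Uc] by blast
    then have "continuous_on {0..real N} u" by (rule continuous_on_cong[THEN iffD1, rotated 2]) (auto simp: uN)
    then have "continuous (at x within {0..real N}) u"
      using x0 xN by (simp add: continuous_on_eq_continuous_within)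
    moreover have "at x within I = at x within {0..real N}"
      by (rule at_within_nhd[of x "{..<real N}"]) (use xN in \<open>auto simp: I0\<close>)
    ultimately show "continuous (at x within I) u" by simp
  qed
  have "u t = Pm (f t - S u t)" if t: "t \<in> I" for t
  proof -
    define N where "N = nat \<lceil>t\<rceil>"
    have tN: "t \<in> {0..real N}" using t unfolding N_def I0 by (simp; linarith)
    have sub: "{0..real N} \<subseteq> I" by (auto simp: I0)
    have "S (U N) t = S u t"
      by (rule causal[OF sub tN UcI ucont]) (use tN in \<open>auto intro!: uN[symmetric]\<close>)
    then show ?thesis using uN[OF tN] Ue[OF tN] by simp
  qed
  then show ?thesis using ucont by blast
qed

lemma sol_unique:
  assumes I: "(\<exists>T>0. I = {0..T}) \<or> I = {0..}"
    and c1: "continuous_on I u1" and c2: "continuous_on I u2"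
    and e1: "\<And>t. t \<in> I \<Longrightarrow> u1 t = Pm (f t - S u1 t)"
    and e2: "\<And>t. t \<in> I \<Longrightarrow> u2 t = Pm (f t - S u2 t)"
  shows "\<forall>t\<in>I. u1 t = u2 t"
proof
  fix t assume t: "t \<in> I"
  have sub: "{0..t} \<subseteq> I" using I t by auto
  have "\<And>s. s \<in> {0..t} \<Longrightarrow> u1 s = u2 s"
    by (rule sol_unique_T[OF sub c1 c2]) (use sub e1 e2 in auto)
  then show "u1 t = u2 t" using I t by auto
qed

end

theorem corollary3p2:
  fixes K :: "'a::{real_inner, complete_space} set"
    and I :: "real set"
    and A :: "'a \<Rightarrow> 'a"
    and f :: "real \<Rightarrow> 'a"
    and S :: "(real \<Rightarrow> 'a) \<Rightarrow> (real \<Rightarrow> 'a)"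
    and j :: "'a \<Rightarrow> 'a \<Rightarrow> real"
    and m_A L_A \<alpha>_j :: real
  assumes I: "(\<exists>T>0. I = {0..T}) \<or> I = {0..}"
    and K: "K \<noteq> {}" "closed K" "convex K" "cone K"
    and A_mon: "\<And>u v. inner (A u - A v) (u - v) \<ge> m_A * (norm (u - v))\<^sup>2"
    and A_lip: "\<And>u v. norm (A u - A v) \<le> L_A * norm (u - v)"
    and mL: "m_A > 0" "L_A > 0"
    and f: "continuous_on I f"
    and S_maps: "\<And>u. continuous_on I u \<Longrightarrow> continuous_on I (S u)"
    and S_hist: "history_dependent I S"
    and j_convex: "\<And>\<eta>. convex_on K (j \<eta>)"
    and j_homog: "\<And>\<eta> c v. c > 0 \<Longrightarrow> v \<in> K \<Longrightarrow> j \<eta> (c *\<^sub>R v) = c * j \<eta> v"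
    and j_lip: "\<And>\<eta>. \<exists>L. L-lipschitz_on K (j \<eta>)"
    and alpha: "\<alpha>_j \<ge> 0"
    and j_cross: "\<And>\<eta>1 \<eta>2 v1 v2. v1 \<in> K \<Longrightarrow> v2 \<in> K \<Longrightarrow>
        j \<eta>1 v2 - j \<eta>1 v1 + j \<eta>2 v1 - j \<eta>2 v2 \<le> \<alpha>_j * norm (\<eta>1 - \<eta>2) * norm (v1 - v2)"
    and small: "\<alpha>_j + 1 < m_A"
  shows "(\<exists>u. continuous_on I u \<and> (\<forall>t\<in>I. u t \<in> K) \<and>
            (\<forall>t\<in>I. - u t \<in> normal_cone (Cset_t K j f (u t) t) (A (u t) + S u t)))
       \<and> (\<forall>u1 u2. (continuous_on I u1 \<and> (\<forall>t\<in>I. u1 t \<in> K) \<and>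
            (\<forall>t\<in>I. - u1 t \<in> normal_cone (Cset_t K j f (u1 t) t) (A (u1 t) + S u1 t)))
          \<and> (continuous_on I u2 \<and> (\<forall>t\<in>I. u2 t \<in> K) \<and>
            (\<forall>t\<in>I. - u2 t \<in> normal_cone (Cset_t K j f (u2 t) t) (A (u2 t) + S u2 t)))
          \<longrightarrow> (\<forall>t\<in>I. u1 t = u2 t))"
proof -
  interpret V: vi_setting K A j m_A L_A \<alpha>_j
    by (unfold_locales) (use K A_mon A_lip mL j_convex j_homog j_lip alpha j_cross small in auto)
  interpret H: hist_setting I S f V.P "1 / (m_A - \<alpha>_j)"
    by (unfold_locales) (use f S_maps S_hist V.P_lip small in auto)
  have NCeq: "- v \<in> normal_cone (Cset_t K j f v t) (A v + S w t) \<longleftrightarrow> v = V.P (f t - S w t)"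
    if v: "v \<in> K" for v w t
  proof -
    have "- v \<in> normal_cone (Cset_t K j f v t) (A v + S w t) \<longleftrightarrow> V.VI (f t - S w t) v"
      using V.VI_iff_NC[OF v] by simp
    also have "\<dots> \<longleftrightarrow> v = V.P (f t - S w t)" using V.P_eq V.P_VI by blast
    finally show ?thesis .
  qed
  have ex: "\<exists>u. continuous_on I u \<and> (\<forall>t\<in>I. u t \<in> K) \<and>
            (\<forall>t\<in>I. - u t \<in> normal_cone (Cset_t K j f (u t) t) (A (u t) + S u t))"
  proof -
    obtain u where u: "continuous_on I u" "\<forall>t\<in>I. u t = V.P (f t - S u t)"
      using H.sol_exists[OF I] by blast
    have uK: "\<forall>t\<in>I. u t \<in> K" using u(2) V.P_K by metis
    have "\<forall>t\<in>I. - u t \<in> normal_cone (Cset_t K j f (u t) t) (A (u t) + S u t)"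
      using u(2) uK NCeq by blast
    then show ?thesis using u(1) uK by blast
  qed
  have un: "\<forall>u1 u2. (continuous_on I u1 \<and> (\<forall>t\<in>I. u1 t \<in> K) \<and>
            (\<forall>t\<in>I. - u1 t \<in> normal_cone (Cset_t K j f (u1 t) t) (A (u1 t) + S u1 t)))
          \<and> (continuous_on I u2 \<and> (\<forall>t\<in>I. u2 t \<in> K) \<and>
            (\<forall>t\<in>I. - u2 t \<in> normal_cone (Cset_t K j f (u2 t) t) (A (u2 t) + S u2 t)))
          \<longrightarrow> (\<forall>t\<in>I. u1 t = u2 t)"
  proof (intro allI impI)
    fix u1 u2
    assume h: "(continuous_on I u1 \<and> (\<forall>t\<in>I. u1 t \<in> K) \<and>
            (\<forall>t\<in>I. - u1 t \<in> normal_cone (Cset_t K j f (u1 t) t) (A (u1 t) + S u1 t)))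
          \<and> (continuous_on I u2 \<and> (\<forall>t\<in>I. u2 t \<in> K) \<and>
            (\<forall>t\<in>I. - u2 t \<in> normal_cone (Cset_t K j f (u2 t) t) (A (u2 t) + S u2 t)))"
    have e1: "u1 t = V.P (f t - S u1 t)" if "t \<in> I" for t using h that NCeq by blast
    have e2: "u2 t = V.P (f t - S u2 t)" if "t \<in> I" for t using h that NCeq by blast
    show "\<forall>t\<in>I. u1 t = u2 t" by (rule H.sol_unique[OF I _ _ e1 e2]) (use h in auto)
  qed
  show ?thesis using ex un by blast
qed

end
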